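(* Let $X$ be a countable infinite set, $\mathcal{I}$ a meager ideal on $X$, and $(Y,\rho)$ a countable crowded $T_1$ space with $\pi w(\rho)<\mathfrak{m}_c$. Then there is an $\mathcal{I}$-crowded topology $\tau$ on $X$ such that $(X,\tau)$ is homeomorphic to $(Y,\rho)$.
   Context: An ideal on $X$ is a family of subsets of $X$ closed under subsets and finite unions; all ideals are assumed proper ($X\notin\mathcal{I}$) and free (every finite subset of $X$ is in $\mathcal{I}$). Meagerness refers to $\mathcal{I}$ as a subset of $2^X$ (identifying sets with characteristic functions). A topology $\tau$ on $X$ is $\mathcal{I}$-crowded if $\tau\cap\mathcal{I}=\{\emptyset\}$. Crowded means without isolated points. $\mathfrak{m}_c$ is the least cardinal $\kappa$ such that MA$(\kappa)$ for countable posets fails. $\pi w$ denotes $\pi$-weight. *)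

theory Defs
  imports "HOL-Analysis.Analysis"
begin

definition is_ideal :: "'a set \<Rightarrow> 'a set set \<Rightarrow> bool" where
  "is_ideal X I \<longleftrightarrow> I \<subseteq> Pow X
     \<and> (\<forall>A\<in>I. \<forall>B. B \<subseteq> A \<longrightarrow> B \<in> I)
     \<and> (\<forall>A\<in>I. \<forall>B\<in>I. A \<union> B \<in> I)
     \<and> X \<notin> I
     \<and> (\<forall>F. F \<subseteq> X \<and> finite F \<longrightarrow> F \<in> I)"

text \<open>Cantor space 2^X: product of discrete two-point spaces; a set A is identified
  with its characteristic function (restricted to X).\<close>
definition cantor_space :: "'a set \<Rightarrow> ('a \<Rightarrow> bool) topology" where
  "cantor_space X = product_topology (\<lambda>_. discrete_topology (UNIV::bool set)) X"

definition char_fun :: "'a set \<Rightarrow> 'a set \<Rightarrow> ('a \<Rightarrow> bool)" where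
  "char_fun X A = restrict (\<lambda>x. x \<in> A) X"

definition nowhere_dense_in :: "'a topology \<Rightarrow> 'a set \<Rightarrow> bool" where
  "nowhere_dense_in T N \<longleftrightarrow> N \<subseteq> topspace T \<and> T interior_of (T closure_of N) = {}"

definition meager_in :: "'a topology \<Rightarrow> 'a set \<Rightarrow> bool" where
  "meager_in T S \<longleftrightarrow> (\<exists>F. countable F \<and> (\<forall>N\<in>F. nowhere_dense_in T N) \<and> S \<subseteq> \<Union>F)"

definition meager_ideal :: "'a set \<Rightarrow> 'a set set \<Rightarrow> bool" where
  "meager_ideal X I \<longleftrightarrow> meager_in (cantor_space X) (char_fun X ` I)"

definition I_crowded :: "'a set set \<Rightarrow> 'a topology \<Rightarrow> bool" where
  "I_crowded I \<tau> \<longleftrightarrow> (\<forall>U. openin \<tau> U \<and> U \<in> I \<longrightarrow> U = {})"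

definition crowded :: "'a topology \<Rightarrow> bool" where
  "crowded T \<longleftrightarrow> (\<forall>y\<in>topspace T. \<not> openin T {y})"

definition pi_base :: "'a topology \<Rightarrow> 'a set set \<Rightarrow> bool" where
  "pi_base T B \<longleftrightarrow> (\<forall>V\<in>B. openin T V \<and> V \<noteq> {})
     \<and> (\<forall>U. openin T U \<and> U \<noteq> {} \<longrightarrow> (\<exists>V\<in>B. V \<subseteq> U))"

text \<open>B is a pi-base of minimal cardinality, i.e. |B| = pi w(T).\<close>
definition pi_weight_witness :: "'a topology \<Rightarrow> 'a set set \<Rightarrow> bool" where
  "pi_weight_witness T B \<longleftrightarrow> pi_base T B
     \<and> (\<forall>B'. pi_base T B' \<longrightarrow> (card_of B, card_of B') \<in> ordLeq)"

text \<open>Countable posets (preorders) are w.l.o.g. carried by a nonempty set of naturals.\<close>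
definition ctbl_poset :: "nat set \<Rightarrow> (nat \<Rightarrow> nat \<Rightarrow> bool) \<Rightarrow> bool" where
  "ctbl_poset P le \<longleftrightarrow> P \<noteq> {} \<and> (\<forall>p\<in>P. le p p)
     \<and> (\<forall>p\<in>P. \<forall>q\<in>P. \<forall>r\<in>P. le p q \<and> le q r \<longrightarrow> le p r)"

definition dense_in_poset :: "nat set \<Rightarrow> (nat \<Rightarrow> nat \<Rightarrow> bool) \<Rightarrow> nat set \<Rightarrow> bool" where
  "dense_in_poset P le D \<longleftrightarrow> D \<subseteq> P \<and> (\<forall>p\<in>P. \<exists>q\<in>D. le q p)"

definition filter_in_poset :: "nat set \<Rightarrow> (nat \<Rightarrow> nat \<Rightarrow> bool) \<Rightarrow> nat set \<Rightarrow> bool" where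
  "filter_in_poset P le G \<longleftrightarrow> G \<subseteq> P \<and> G \<noteq> {}
     \<and> (\<forall>p\<in>G. \<forall>q\<in>P. le p q \<longrightarrow> q \<in> G)
     \<and> (\<forall>p\<in>G. \<forall>q\<in>G. \<exists>r\<in>G. le r p \<and> le r q)"

text \<open>MA(kappa) for countable posets, with kappa = |S|: every family of at most |S|
  dense subsets of a countable poset is met by a single filter.\<close>
definition MA_countable :: "'b set \<Rightarrow> bool" where
  "MA_countable S \<longleftrightarrow> (\<forall>P le (\<D>::nat set set). ctbl_poset P le
      \<and> (card_of \<D>, card_of S) \<in> ordLeq \<and> (\<forall>D\<in>\<D>. dense_in_poset P le D)
      \<longrightarrow> (\<exists>G. filter_in_poset P le G \<and> (\<forall>D\<in>\<D>. G \<inter> D \<noteq> {})))"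

text \<open>pi w(T) < m_c: since MA(kappa) is downward monotone in kappa and m_c is the least
  kappa where it fails, kappa < m_c iff MA(kappa) holds.\<close>
definition pi_weight_less_mc :: "'a topology \<Rightarrow> bool" where
  "pi_weight_less_mc T \<longleftrightarrow> (\<exists>B. pi_weight_witness T B \<and> MA_countable B)"

end

theory Submission
  imports Defs
begin



definition cyl :: "'a set \<Rightarrow> 'a set \<Rightarrow> 'a set \<Rightarrow> ('a \<Rightarrow> bool) set" where
  "cyl X G s = {f \<in> topspace (cantor_space X). \<forall>x\<in>G. f x = (x \<in> s)}"

lemma topspace_cantor: "topspace (cantor_space X) = PiE X (\<lambda>_. UNIV)"
  by (simp add: cantor_space_def)

lemma cyl_open:
  assumes "finite G" "G \<subseteq> X"
  shows "openin (cantor_space X) (cyl X G s)"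
proof -
  define S where "S = (\<lambda>x. if x \<in> G then {(x \<in> s)} else (UNIV::bool set))"
  have eq: "cyl X G s = PiE X S"
  proof (rule set_eqI)
    fix f :: "'a \<Rightarrow> bool"
    have "(\<forall>x\<in>X. f x \<in> S x) \<longleftrightarrow> (\<forall>x\<in>G. f x = (x\<in>s))"
      using assms(2) unfolding S_def by auto
    then show "f \<in> cyl X G s \<longleftrightarrow> f \<in> PiE X S"
      unfolding cyl_def topspace_cantor PiE_iff by blast
  qed
  have "finite {i \<in> X. S i \<noteq> topspace (discrete_topology (UNIV::bool set))}"
    by (rule finite_subset[OF _ assms(1)]) (auto simp: S_def)
  then show ?thesis unfolding eq cantor_space_def
    by (subst openin_PiE_gen) auto
qed

lemma cyl_mem: "G \<subseteq> X \<Longrightarrow> restrict (\<lambda>x. x \<in> s) X \<in> cyl X G s"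
  unfolding cyl_def topspace_cantor by auto

lemma cantor_nbhd:
  assumes "openin (cantor_space X) W" "f \<in> W"
  shows "\<exists>H. finite H \<and> H \<subseteq> X \<and> (\<forall>g\<in>topspace (cantor_space X). (\<forall>x\<in>H. g x = f x) \<longrightarrow> g \<in> W)"
proof -
  obtain U where U: "finite {i \<in> X. U i \<noteq> topspace (discrete_topology (UNIV::bool set))}"
     "f \<in> Pi\<^sub>E X U" "Pi\<^sub>E X U \<subseteq> W"
  proof -
    have "\<forall>x\<in>W. \<exists>U. finite {i \<in> X. U i \<noteq> topspace (discrete_topology (UNIV::bool set))} \<and>
                 (\<forall>i \<in> X. openin (discrete_topology (UNIV::bool set)) (U i)) \<and> x \<in> Pi\<^sub>E X U \<and> Pi\<^sub>E X U \<subseteq> W"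
      using assms(1) unfolding cantor_space_def openin_product_topology_alt .
    from bspec[OF this assms(2)] show ?thesis using that by blast
  qed
  let ?H = "{i \<in> X. U i \<noteq> UNIV}"
  show ?thesis
  proof (intro exI[of _ ?H] conjI ballI impI)
    show "finite ?H" using U(1) by simp
    show "?H \<subseteq> X" by auto
    fix g assume g: "g \<in> topspace (cantor_space X)" "\<forall>x\<in>?H. g x = f x"
    have "g \<in> Pi\<^sub>E X U"
      unfolding PiE_iff
    proof (intro conjI ballI)
      show "g \<in> extensional X" using g(1) unfolding topspace_cantor by (simp add: PiE_iff)
      fix i assume i: "i \<in> X"
      show "g i \<in> U i"
      proof (cases "U i = UNIV")
        case False then show ?thesis using g(2) i U(2) by (auto simp: PiE_iff)
      qed simp
    qed
    then show "g \<in> W" using U(3) by blast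
  qed
qed




lemma stepA:
  assumes nd: "nowhere_dense_in (cantor_space X) N"
    and F: "finite F" "F \<subseteq> X" and G: "finite G" "G \<subseteq> X" "G \<inter> F = {}" "s \<subseteq> G" and u: "u \<subseteq> F"
  shows "\<exists>G' s'. finite G' \<and> G \<subseteq> G' \<and> G' \<subseteq> X \<and> G' \<inter> F = {} \<and> s' \<subseteq> G' \<and> s' \<inter> G = s \<and>
     (\<forall>f\<in>topspace (cantor_space X). (\<forall>x\<in>F. f x = (x\<in>u)) \<and> (\<forall>x\<in>G'. f x = (x\<in>s')) \<longrightarrow> f \<notin> N)"
proof -
  let ?T = "cantor_space X"
  let ?C = "cyl X (F \<union> G) (u \<union> s)"
  have Co: "openin ?T ?C" using F G by (intro cyl_open) auto
  have "restrict (\<lambda>x. x \<in> u \<union> s) X \<in> ?C" by (rule cyl_mem) (use F G in simp)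
  then have Cne: "?C \<noteq> {}" by blast
  have "\<not> ?C \<subseteq> ?T closure_of N"
  proof
    assume "?C \<subseteq> ?T closure_of N"
    then have "?C \<subseteq> ?T interior_of (?T closure_of N)" using Co by (rule interior_of_maximal)
    moreover have "?T interior_of (?T closure_of N) = {}" using nd unfolding nowhere_dense_in_def by blast
    ultimately show False using Cne by blast
  qed
  then obtain f0 where f0: "f0 \<in> ?C" "f0 \<notin> ?T closure_of N" by blast
  have f0t: "f0 \<in> topspace ?T" using f0(1) unfolding cyl_def by blast
  have Wo: "openin ?T (topspace ?T - ?T closure_of N)" by (simp add: openin_diff)
  have "f0 \<in> topspace ?T - ?T closure_of N" using f0(2) f0t by blast
  from cantor_nbhd[OF Wo this] obtain H where H: "finite H" "H \<subseteq> X"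
    "\<forall>g\<in>topspace ?T. (\<forall>x\<in>H. g x = f0 x) \<longrightarrow> g \<in> topspace ?T - ?T closure_of N"
    by blast
  define G' where "G' = (H \<union> G) - F"
  define s' where "s' = {x \<in> G'. f0 x}"
  have f0F: "\<forall>x\<in>F. f0 x = (x \<in> u)" using f0(1) G(3,4) u unfolding cyl_def by auto
  have f0G: "\<forall>x\<in>G. f0 x = (x \<in> s)" using f0(1) G(3,4) u unfolding cyl_def by auto
  have c1: "finite G'" using H G unfolding G'_def by auto
  have c2: "G \<subseteq> G'" using G unfolding G'_def by auto
  have c3: "G' \<subseteq> X" using H G unfolding G'_def by auto
  have c4: "G' \<inter> F = {}" unfolding G'_def by auto
  have c5: "s' \<subseteq> G'" unfolding s'_def by auto
  have "x \<in> s' \<longleftrightarrow> x \<in> s" if "x \<in> G" for x using that f0G G(3) unfolding s'_def G'_def by auto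
  then have c6: "s' \<inter> G = s" using G(4) by auto
  have c7: "\<forall>f\<in>topspace ?T. (\<forall>x\<in>F. f x = (x\<in>u)) \<and> (\<forall>x\<in>G'. f x = (x\<in>s')) \<longrightarrow> f \<notin> N"
  proof (intro ballI impI)
    fix f assume ft: "f \<in> topspace ?T" and pat: "(\<forall>x\<in>F. f x = (x\<in>u)) \<and> (\<forall>x\<in>G'. f x = (x\<in>s'))"
    have "\<forall>x\<in>H. f x = f0 x"
    proof
      fix x assume "x \<in> H"
      then show "f x = f0 x"
      proof (cases "x \<in> F")
        case True then show ?thesis using pat f0F by auto
      next
        case False then have "x \<in> G'" using \<open>x \<in> H\<close> unfolding G'_def by auto
        then show ?thesis using pat unfolding s'_def by auto
      qed
    qed
    then have "f \<notin> ?T closure_of N" using H(3) ft by auto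
    moreover have "N \<subseteq> ?T closure_of N" using nd unfolding nowhere_dense_in_def by (simp add: closure_of_subset)
    ultimately show "f \<notin> N" by auto
  qed
  show ?thesis using c1 c2 c3 c4 c5 c6 c7 by blast
qed



lemma stepQ:
  assumes "finite Q" "\<forall>(u,N)\<in>Q. u \<subseteq> F \<and> nowhere_dense_in (cantor_space X) N"
    and F: "finite F" "F \<subseteq> X"
  shows "\<exists>G s. finite G \<and> G \<subseteq> X \<and> G \<inter> F = {} \<and> s \<subseteq> G \<and>
     (\<forall>(u,N)\<in>Q. \<forall>f\<in>topspace (cantor_space X). (\<forall>x\<in>F. f x = (x\<in>u)) \<and> (\<forall>x\<in>G. f x = (x\<in>s)) \<longrightarrow> f \<notin> N)"
  using assms(1,2)
proof (induction Q rule: finite_induct)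
  case empty
  show ?case by (intro exI[of _ "{}"]) auto
next
  case (insert q Q)
  obtain u N where q: "q = (u, N)" by force
  from insert obtain G s where Gs: "finite G" "G \<subseteq> X" "G \<inter> F = {}" "s \<subseteq> G"
    "\<forall>(u,N)\<in>Q. \<forall>f\<in>topspace (cantor_space X). (\<forall>x\<in>F. f x = (x\<in>u)) \<and> (\<forall>x\<in>G. f x = (x\<in>s)) \<longrightarrow> f \<notin> N"
    by auto
  have uN: "u \<subseteq> F" "nowhere_dense_in (cantor_space X) N" using insert(4) q by auto
  obtain G' s' where G': "finite G'" "G \<subseteq> G'" "G' \<subseteq> X" "G' \<inter> F = {}" "s' \<subseteq> G'" "s' \<inter> G = s"
     "\<forall>f\<in>topspace (cantor_space X). (\<forall>x\<in>F. f x = (x\<in>u)) \<and> (\<forall>x\<in>G'. f x = (x\<in>s')) \<longrightarrow> f \<notin> N"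
    using stepA[OF uN(2) F Gs(1-4) uN(1)] by blast
  have mono: "\<forall>x\<in>G. f x = (x\<in>s)" if "\<forall>x\<in>G'. f x = (x\<in>s')" for f :: "'a \<Rightarrow> bool"
    using that G'(2,6) by auto
  have old: "\<forall>(u,N)\<in>Q. \<forall>f\<in>topspace (cantor_space X). (\<forall>x\<in>F. f x = (x\<in>u)) \<and> (\<forall>x\<in>G'. f x = (x\<in>s')) \<longrightarrow> f \<notin> N"
  proof (intro ballI)
    fix q' assume q': "q' \<in> Q"
    obtain u' N' where q'e: "q' = (u', N')" by force
    have "\<forall>f\<in>topspace (cantor_space X). (\<forall>x\<in>F. f x = (x\<in>u')) \<and> (\<forall>x\<in>G. f x = (x\<in>s)) \<longrightarrow> f \<notin> N'"
      using bspec[OF Gs(5) q'] unfolding q'e by (simp only: prod.case)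
    then have "\<forall>f\<in>topspace (cantor_space X). (\<forall>x\<in>F. f x = (x\<in>u')) \<and> (\<forall>x\<in>G'. f x = (x\<in>s')) \<longrightarrow> f \<notin> N'"
      using mono by blast
    then show "case q' of (u, N) \<Rightarrow> \<forall>f\<in>topspace (cantor_space X). (\<forall>x\<in>F. f x = (x\<in>u)) \<and> (\<forall>x\<in>G'. f x = (x\<in>s')) \<longrightarrow> f \<notin> N"
      unfolding q'e by (simp only: prod.case)
  qed
  have "\<forall>(u',N')\<in>insert q Q. \<forall>f\<in>topspace (cantor_space X). (\<forall>x\<in>F. f x = (x\<in>u')) \<and> (\<forall>x\<in>G'. f x = (x\<in>s')) \<longrightarrow> f \<notin> N'"
    using old G'(7) q by auto
  then show ?case using G'(1,3,4,5) by blast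
qed

lemma stepN:
  assumes "finite Ns" "\<forall>N\<in>Ns. nowhere_dense_in (cantor_space X) N" "finite F" "F \<subseteq> X"
  shows "\<exists>G s. finite G \<and> G \<subseteq> X \<and> G \<inter> F = {} \<and> s \<subseteq> G \<and>
     (\<forall>N\<in>Ns. \<forall>f\<in>topspace (cantor_space X). (\<forall>x\<in>G. f x = (x\<in>s)) \<longrightarrow> f \<notin> N)"
proof -
  obtain G s where Gs: "finite G" "G \<subseteq> X" "G \<inter> F = {}" "s \<subseteq> G"
     "\<forall>(u,N)\<in>Pow F \<times> Ns. \<forall>f\<in>topspace (cantor_space X). (\<forall>x\<in>F. f x = (x\<in>u)) \<and> (\<forall>x\<in>G. f x = (x\<in>s)) \<longrightarrow> f \<notin> N"
    using stepQ[of "Pow F \<times> Ns" F X] assms by auto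
  have "\<forall>N\<in>Ns. \<forall>f\<in>topspace (cantor_space X). (\<forall>x\<in>G. f x = (x\<in>s)) \<longrightarrow> f \<notin> N"
  proof (intro ballI impI)
    fix N f assume "N \<in> Ns" "f \<in> topspace (cantor_space X)" "\<forall>x\<in>G. f x = (x\<in>s)"
    have "({x\<in>F. f x}, N) \<in> Pow F \<times> Ns" using \<open>N \<in> Ns\<close> by auto
    note bspec[OF Gs(5) this]
    then have "\<forall>g\<in>topspace (cantor_space X). (\<forall>x\<in>F. g x = (x\<in>{x\<in>F. f x})) \<and> (\<forall>x\<in>G. g x = (x\<in>s)) \<longrightarrow> g \<notin> N"
      by (simp only: prod.case)
    then show "f \<notin> N" using \<open>f \<in> topspace (cantor_space X)\<close> \<open>\<forall>x\<in>G. f x = (x\<in>s)\<close> by auto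
  qed
  then show ?thesis using Gs(1-4) by blast
qed





definition tprop :: "'a set \<Rightarrow> (nat \<Rightarrow> ('a\<Rightarrow>bool) set) \<Rightarrow> 'a set \<Rightarrow> nat \<Rightarrow> 'a set \<times> 'a set \<Rightarrow> bool" where
  "tprop X Ns F k p \<longleftrightarrow> finite (fst p) \<and> fst p \<subseteq> X \<and> fst p \<inter> F = {} \<and> snd p \<subseteq> fst p \<and>
     (\<forall>j\<le>k. \<forall>f\<in>topspace (cantor_space X). (\<forall>x\<in>fst p. f x = (x \<in> snd p)) \<longrightarrow> f \<notin> Ns j)"

definition tpick :: "'a set \<Rightarrow> (nat \<Rightarrow> ('a\<Rightarrow>bool) set) \<Rightarrow> 'a set \<Rightarrow> nat \<Rightarrow> 'a set \<times> 'a set" where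
  "tpick X Ns F k = (SOME p. tprop X Ns F k p)"

primrec tFs :: "'a set \<Rightarrow> (nat \<Rightarrow> ('a\<Rightarrow>bool) set) \<Rightarrow> nat \<Rightarrow> 'a set" where
  "tFs X Ns 0 = {}"
| "tFs X Ns (Suc k) = tFs X Ns k \<union> fst (tpick X Ns (tFs X Ns k) k)"

definition tG :: "'a set \<Rightarrow> (nat \<Rightarrow> ('a\<Rightarrow>bool) set) \<Rightarrow> nat \<Rightarrow> 'a set" where
  "tG X Ns k = fst (tpick X Ns (tFs X Ns k) k)"

definition ts :: "'a set \<Rightarrow> (nat \<Rightarrow> ('a\<Rightarrow>bool) set) \<Rightarrow> nat \<Rightarrow> 'a set" where
  "ts X Ns k = snd (tpick X Ns (tFs X Ns k) k)"

lemma tpick_prop: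
  assumes nd: "\<forall>j. nowhere_dense_in (cantor_space X) (Ns j)" and F: "finite F" "F \<subseteq> X"
  shows "tprop X Ns F k (tpick X Ns F k)"
proof -
  have fin: "finite (Ns ` {..k})" by simp
  have nd': "\<forall>N\<in>Ns ` {..k}. nowhere_dense_in (cantor_space X) N" using nd by blast
  from stepN[OF fin nd' F] obtain G s where Gs: "finite G" "G \<subseteq> X" "G \<inter> F = {}" "s \<subseteq> G"
     "\<forall>N\<in>Ns ` {..k}. \<forall>f\<in>topspace (cantor_space X). (\<forall>x\<in>G. f x = (x\<in>s)) \<longrightarrow> f \<notin> N"
    by (elim exE conjE) (rule that; assumption)
  have "tprop X Ns F k (G, s)" unfolding tprop_def using Gs by auto
  then show ?thesis unfolding tpick_def by (rule someI)
qed

lemma tFs_prop: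
  assumes nd: "\<forall>j. nowhere_dense_in (cantor_space X) (Ns j)"
  shows "finite (tFs X Ns k) \<and> tFs X Ns k \<subseteq> X"
proof (induction k)
  case 0 then show ?case by simp
next
  case (Suc k)
  then have "tprop X Ns (tFs X Ns k) k (tpick X Ns (tFs X Ns k) k)" using tpick_prop[OF nd] by blast
  then show ?case using Suc unfolding tprop_def by auto
qed

lemma tG_prop:
  assumes nd: "\<forall>j. nowhere_dense_in (cantor_space X) (Ns j)"
  shows "finite (tG X Ns k)" "tG X Ns k \<subseteq> X" "tG X Ns k \<inter> tFs X Ns k = {}" "ts X Ns k \<subseteq> tG X Ns k"
    "\<And>j f. j \<le> k \<Longrightarrow> f \<in> topspace (cantor_space X) \<Longrightarrow> (\<forall>x\<in>tG X Ns k. f x = (x \<in> ts X Ns k)) \<Longrightarrow> f \<notin> Ns j"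
proof -
  have "tprop X Ns (tFs X Ns k) k (tpick X Ns (tFs X Ns k) k)"
    using tpick_prop[OF nd] tFs_prop[OF nd] by blast
  then have P: "tprop X Ns (tFs X Ns k) k (tG X Ns k, ts X Ns k)" unfolding tG_def ts_def by simp
  show "finite (tG X Ns k)" "tG X Ns k \<subseteq> X" "tG X Ns k \<inter> tFs X Ns k = {}" "ts X Ns k \<subseteq> tG X Ns k"
    using P unfolding tprop_def by auto
  show "\<And>j f. j \<le> k \<Longrightarrow> f \<in> topspace (cantor_space X) \<Longrightarrow> (\<forall>x\<in>tG X Ns k. f x = (x \<in> ts X Ns k)) \<Longrightarrow> f \<notin> Ns j"
    using P unfolding tprop_def by auto
qed

lemma tG_sub_tFs: "i < k \<Longrightarrow> tG X Ns i \<subseteq> tFs X Ns k"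
proof (induction k)
  case 0 then show ?case by simp
next
  case (Suc k)
  then show ?case by (cases "i = k") (auto simp: tG_def)
qed

lemma tG_disj:
  assumes nd: "\<forall>j. nowhere_dense_in (cantor_space X) (Ns j)" and "i \<noteq> k"
  shows "tG X Ns i \<inter> tG X Ns k = {}"
proof (cases "i < k")
  case True
  have a: "tG X Ns i \<subseteq> tFs X Ns k" by (rule tG_sub_tFs[OF True])
  have b: "tG X Ns k \<inter> tFs X Ns k = {}" by (rule tG_prop(3)[OF nd])
  show ?thesis using a b by blast
next
  case False then have "k < i" using assms(2) by simp
  have a: "tG X Ns k \<subseteq> tFs X Ns i" by (rule tG_sub_tFs[OF \<open>k < i\<close>])
  have b: "tG X Ns i \<inter> tFs X Ns i = {}" by (rule tG_prop(3)[OF nd])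
  show ?thesis using a b by blast
qed

lemma talagrand:
  assumes I: "is_ideal X I" and nd: "\<forall>j. nowhere_dense_in (cantor_space X) (Ns j)"
    and cov: "char_fun X ` I \<subseteq> \<Union>(range Ns)" and A: "A \<subseteq> X"
    and inf: "infinite {k. ts X Ns k \<subseteq> A}"
  shows "A \<notin> I"
proof
  assume AI: "A \<in> I"
  define K where "K = {k. ts X Ns k \<subseteq> A}"
  define B where "B = (A - \<Union>(tG X Ns ` K)) \<union> \<Union>(ts X Ns ` K)"
  have BA: "B \<subseteq> A" unfolding B_def K_def by auto
  have BI: "B \<in> I" using I AI BA unfolding is_ideal_def by blast
  then obtain j where j: "char_fun X B \<in> Ns j" using cov by blast
  obtain k where k: "k \<in> K" "j \<le> k" using inf unfolding K_def infinite_nat_iff_unbounded_le by blast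
  have top: "char_fun X B \<in> topspace (cantor_space X)"
    unfolding char_fun_def topspace_cantor by auto
  have pat: "\<forall>x\<in>tG X Ns k. char_fun X B x = (x \<in> ts X Ns k)"
  proof
    fix x assume x: "x \<in> tG X Ns k"
    have xX: "x \<in> X" using x tG_prop(2)[OF nd, where k=k] by blast
    have "x \<in> B \<longleftrightarrow> x \<in> ts X Ns k"
    proof
      assume "x \<in> B"
      then consider "x \<in> A - \<Union>(tG X Ns ` K)" | k' where "k' \<in> K" "x \<in> ts X Ns k'"
        unfolding B_def by blast
      then show "x \<in> ts X Ns k"
      proof cases
        case 1 then show ?thesis using x k(1) by blast
      next
        case 2
        then have "x \<in> tG X Ns k'" using tG_prop(4)[OF nd, where k=k'] by blast
        then have "k' = k" using x tG_disj[OF nd, of k' k] by blast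
        then show ?thesis using 2 by simp
      qed
    next
      assume "x \<in> ts X Ns k" then show "x \<in> B" using k(1) unfolding B_def by blast
    qed
    then show "char_fun X B x = (x \<in> ts X Ns k)" using xX unfolding char_fun_def by simp
  qed
  show False using tG_prop(5)[OF nd k(2) top pat] j by contradiction
qed




lemma open_infinite:
  assumes t1: "t1_space \<rho>" and cr: "crowded \<rho>" and V: "openin \<rho> V" "V \<noteq> {}"
  shows "infinite V"
proof
  assume fin: "finite V"
  obtain y where y: "y \<in> V" using V(2) by blast
  have Vt: "V \<subseteq> topspace \<rho>" using V(1) by (rule openin_subset)
  have "closedin \<rho> (V - {y})" using t1 fin Vt unfolding t1_space_closedin_finite by auto
  then have "openin \<rho> (V - (V - {y}))" by (rule openin_diff[OF V(1)])
  moreover have "V - (V - {y}) = {y}" using y by blast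
  ultimately have "openin \<rho> {y}" by simp
  moreover have "y \<in> topspace \<rho>" using y Vt by blast
  ultimately show False using cr unfolding crowded_def by blast
qed

lemma pi_base_infinite:
  assumes t1: "t1_space \<rho>" and cr: "crowded \<rho>" and ne: "topspace \<rho> \<noteq> {}" and pb: "pi_base \<rho> B"
  shows "infinite B"
proof
  assume fin: "finite B"
  define c :: "'a set \<Rightarrow> 'a" where "c V = (SOME y. y \<in> V)" for V
  have cV: "c V \<in> V" if "V \<in> B" for V
  proof -
    have "V \<noteq> {}" using pb that unfolding pi_base_def by blast
    then show ?thesis unfolding c_def by (simp add: some_in_eq)
  qed
  have sub: "c ` B \<subseteq> topspace \<rho>"
  proof
    fix y assume "y \<in> c ` B"
    then obtain V where "V \<in> B" "y = c V" by blast
    moreover have "openin \<rho> V" using pb \<open>V \<in> B\<close> unfolding pi_base_def by blast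
    ultimately show "y \<in> topspace \<rho>" using cV openin_subset by blast
  qed
  have cl: "closedin \<rho> (c ` B)" using t1 fin sub unfolding t1_space_closedin_finite by blast
  have Wo: "openin \<rho> (topspace \<rho> - c ` B)" using cl by blast
  have "infinite (topspace \<rho>)" using open_infinite[OF t1 cr _ ne] by simp
  then have Wne: "topspace \<rho> - c ` B \<noteq> {}" using fin by (metis Diff_eq_empty_iff finite_imageI finite_subset)
  obtain V where "V \<in> B" "V \<subseteq> topspace \<rho> - c ` B" using pb Wo Wne unfolding pi_base_def by blast
  then show False using cV by blast
qed

definition conds :: "'a set \<Rightarrow> 'b set \<Rightarrow> ('a \<times> 'b) set set" where
  "conds X Y = {p. finite p \<and> p \<subseteq> X \<times> Y \<and> (\<forall>a b c d. (a,b) \<in> p \<and> (c,d) \<in> p \<longrightarrow> (a = c \<longleftrightarrow> b = d))}"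

lemma conds_countable: "countable X \<Longrightarrow> countable Y \<Longrightarrow> countable (conds X Y)"
proof -
  assume "countable X" "countable Y"
  then have "countable (X \<times> Y)" by simp
  then have "countable {A. finite A \<and> A \<subseteq> X \<times> Y}" by (rule countable_Collect_finite_subset)
  then show ?thesis by (rule countable_subset[rotated]) (auto simp: conds_def)
qed

lemma conds_empty: "{} \<in> conds X Y" by (simp add: conds_def)

lemma conds_extend:
  assumes p: "p \<in> conds X Y" and S: "finite S" "S \<subseteq> X" "S \<inter> fst ` p = {}"
    and Z: "Z \<subseteq> Y" "infinite Z"
  shows "\<exists>q\<in>conds X Y. p \<subseteq> q \<and> (\<forall>a\<in>S. \<exists>b\<in>Z. (a,b) \<in> q)"
proof -
  have pf: "finite p" using p unfolding conds_def by blast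
  have "infinite (Z - snd ` p)" using Z(2) pf by (simp add: finite_imageI)
  then obtain T where T: "finite T" "card T = card S" "T \<subseteq> Z - snd ` p"
    using infinite_arbitrarily_large by blast
  obtain h where h: "bij_betw h S T" using finite_same_card_bij[OF S(1) T(1)] T(2) by metis
  define q where "q = p \<union> (\<lambda>a. (a, h a)) ` S"
  have hS: "h a \<in> T" if "a \<in> S" for a using h that unfolding bij_betw_def by blast
  have hinj: "h a = h c \<longleftrightarrow> a = c" if "a \<in> S" "c \<in> S" for a c
    using h that unfolding bij_betw_def inj_on_def by blast
  have pinj: "\<forall>a b c d. (a,b) \<in> p \<and> (c,d) \<in> p \<longrightarrow> (a = c \<longleftrightarrow> b = d)" using p unfolding conds_def by blast
  have pXY: "p \<subseteq> X \<times> Y" using p unfolding conds_def by blast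
  have "q \<in> conds X Y"
    unfolding conds_def mem_Collect_eq
  proof (intro conjI allI impI)
    show "finite q" unfolding q_def using pf S(1) by simp
    show "q \<subseteq> X \<times> Y" unfolding q_def using pXY S(2) hS T(3) Z(1) by blast
    fix a b c d assume ab: "(a, b) \<in> q \<and> (c, d) \<in> q"
    show "a = c \<longleftrightarrow> b = d"
    proof (cases "(a,b) \<in> p")
      case True note abp = True
      show ?thesis
      proof (cases "(c,d) \<in> p")
        case True then show ?thesis using abp pinj by blast
      next
        case False
        then have "c \<in> S" "d = h c" using ab unfolding q_def by auto
        moreover have "a \<in> fst ` p" "b \<in> snd ` p" using abp by force+
        moreover have "h c \<notin> snd ` p" using hS[OF \<open>c \<in> S\<close>] T(3) by blast
        ultimately have "a \<noteq> c" "b \<noteq> d" using S(3) by (blast, metis)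
        then show ?thesis by simp
      qed
    next
      case False
      then have aS: "a \<in> S" "b = h a" using ab unfolding q_def by auto
      have haN: "h a \<notin> snd ` p" using hS[OF aS(1)] T(3) by blast
      show ?thesis
      proof (cases "(c,d) \<in> p")
        case True
        moreover have "c \<in> fst ` p" "d \<in> snd ` p" using True by force+
        ultimately have "a \<noteq> c" "b \<noteq> d" using S(3) aS haN by (blast, metis)
        then show ?thesis by simp
      next
        case False
        then have "c \<in> S" "d = h c" using ab unfolding q_def by auto
        then show ?thesis using aS hinj by blast
      qed
    qed
  qed
  moreover have "p \<subseteq> q" unfolding q_def by blast
  moreover have "\<forall>a\<in>S. \<exists>b\<in>Z. (a,b) \<in> q" unfolding q_def using hS T(3) by blast
  ultimately show ?thesis by blast
qed

lemma conds_extend_right: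
  assumes p: "p \<in> conds X Y" and y: "y \<in> Y" and X: "infinite X"
  shows "\<exists>q\<in>conds X Y. p \<subseteq> q \<and> y \<in> snd ` q"
proof (cases "y \<in> snd ` p")
  case True then show ?thesis using p by blast
next
  case False
  have pf: "finite p" using p unfolding conds_def by blast
  have "infinite (X - fst ` p)" using X pf by (simp add: finite_imageI)
  then have "X - fst ` p \<noteq> {}" by (rule infinite_imp_nonempty)
  then obtain x where x: "x \<in> X" "x \<notin> fst ` p" by blast
  define q where "q = insert (x, y) p"
  have pinj: "\<forall>a b c d. (a,b) \<in> p \<and> (c,d) \<in> p \<longrightarrow> (a = c \<longleftrightarrow> b = d)" using p unfolding conds_def by blast
  have pXY: "p \<subseteq> X \<times> Y" using p unfolding conds_def by blast
  have "q \<in> conds X Y"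
    unfolding conds_def mem_Collect_eq
  proof (intro conjI allI impI)
    show "finite q" unfolding q_def using pf by simp
    show "q \<subseteq> X \<times> Y" unfolding q_def using pXY x y by blast
    fix a b c d assume ab: "(a, b) \<in> q \<and> (c, d) \<in> q"
    have xn: "\<And>b. (x,b) \<notin> p" using x by force
    have yn: "\<And>a. (a,y) \<notin> p" using False by force
    show "a = c \<longleftrightarrow> b = d"
    proof (cases "(a,b) = (x,y)")
      case True
      then show ?thesis using ab xn yn unfolding q_def by auto
    next
      case False
      then have abp: "(a,b) \<in> p" using ab unfolding q_def by auto
      show ?thesis
      proof (cases "(c,d) = (x,y)")
        case True then show ?thesis using abp xn yn by auto
      next
        case False then have "(c,d) \<in> p" using ab unfolding q_def by auto
        then show ?thesis using abp pinj by blast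
      qed
    qed
  qed
  moreover have "p \<subseteq> q" "y \<in> snd ` q" unfolding q_def by force+
  ultimately show ?thesis by blast
qed

lemma finite_meets:
  assumes nd: "\<forall>j. nowhere_dense_in (cantor_space X) (Ns j)" and D: "finite D"
  shows "\<exists>k\<ge>j. tG X Ns k \<inter> D = {}"
proof -
  have sing: "finite {k. a \<in> tG X Ns k}" for a
  proof (cases "{k. a \<in> tG X Ns k} = {}")
    case False
    then obtain k0 where k0: "a \<in> tG X Ns k0" by blast
    have "{k. a \<in> tG X Ns k} \<subseteq> {k0}"
    proof
      fix k assume "k \<in> {k. a \<in> tG X Ns k}"
      then have "a \<in> tG X Ns k" by simp
      then show "k \<in> {k0}" using k0 tG_disj[OF nd, of k k0] by blast
    qed
    then show ?thesis using finite_subset by blast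
  qed simp
  have "{k. tG X Ns k \<inter> D \<noteq> {}} \<subseteq> (\<Union>a\<in>D. {k. a \<in> tG X Ns k})" by blast
  then have fin: "finite {k. tG X Ns k \<inter> D \<noteq> {}}" using D sing by (meson finite_UN_I finite_subset)
  define k where "k = Suc (Max (insert j {k. tG X Ns k \<inter> D \<noteq> {}}))"
  have "k \<ge> j" unfolding k_def using fin by (simp add: le_SucI)
  moreover have "k \<notin> {k. tG X Ns k \<inter> D \<noteq> {}}"
  proof
    assume "k \<in> {k. tG X Ns k \<inter> D \<noteq> {}}"
    then have "k \<le> Max (insert j {k. tG X Ns k \<inter> D \<noteq> {}})" using fin by simp
    then show False unfolding k_def by simp
  qed
  ultimately show ?thesis by blast
qed



lemma ext_single: "p \<in> conds X Y \<Longrightarrow> x \<in> X \<Longrightarrow> infinite Y \<Longrightarrow> \<exists>q\<in>conds X Y. p \<subseteq> q \<and> x \<in> fst ` q"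
proof (cases "x \<in> fst ` p")
  case True
  assume "p \<in> conds X Y" then show ?thesis using True by blast
next
  case False
  assume a: "p \<in> conds X Y" "x \<in> X" "infinite Y"
  have "\<exists>q\<in>conds X Y. p \<subseteq> q \<and> (\<forall>a\<in>{x}. \<exists>b\<in>Y. (a,b) \<in> q)"
    apply (rule conds_extend)
    apply (rule a(1))
    apply simp
    using a(2) apply simp
    using False apply blast
    apply simp
    apply (rule a(3))
    done
  then obtain q where q: "q \<in> conds X Y" "p \<subseteq> q" "\<exists>b\<in>Y. (x,b) \<in> q" by blast
  then obtain b where "(x,b) \<in> q" by blast
  then have "x \<in> fst ` q" by (metis fst_conv image_eqI)
  then show ?thesis using q by blast
qed



theorem mainTheorem10:
  fixes X :: "'a set" and I :: "'a set set" and \<rho> :: "'b topology"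
  assumes "countable X" and "infinite X"
    and "is_ideal X I" and "meager_ideal X I"
    and "countable (topspace \<rho>)" and "topspace \<rho> \<noteq> {}" and "crowded \<rho>" and "t1_space \<rho>"
    and "pi_weight_less_mc \<rho>"
  shows "\<exists>\<tau>::'a topology. topspace \<tau> = X \<and> I_crowded I \<tau> \<and> (\<tau> homeomorphic_space \<rho>)"
proof -
  let ?Y = "topspace \<rho>"
  obtain F where F: "countable F" "\<forall>N\<in>F. nowhere_dense_in (cantor_space X) N" "char_fun X ` I \<subseteq> \<Union>F"
    using assms(4) unfolding meager_ideal_def meager_in_def by blast
  have Ihered: "\<And>A B. A \<in> I \<Longrightarrow> B \<subseteq> A \<Longrightarrow> B \<in> I" using assms(3) unfolding is_ideal_def by blast
  have I0: "{} \<in> I" using assms(3) unfolding is_ideal_def by blast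
  then have Fne: "F \<noteq> {}" using F(3) by blast
  define Ns where "Ns = from_nat_into F"
  have rng: "range Ns = F" unfolding Ns_def by (rule range_from_nat_into[OF Fne F(1)])
  have nd: "\<forall>j. nowhere_dense_in (cantor_space X) (Ns j)"
    using F(2) from_nat_into[OF Fne] unfolding Ns_def by blast
  have cov: "char_fun X ` I \<subseteq> \<Union>(range Ns)" using F(3) rng by simp
  have keyI: "A \<notin> I" if "A \<subseteq> X" "\<forall>j. \<exists>k\<ge>j. ts X Ns k \<subseteq> A" for A
  proof -
    have "infinite {k. ts X Ns k \<subseteq> A}" unfolding infinite_nat_iff_unbounded_le using that(2) by simp
    then show ?thesis using talagrand[OF assms(3) nd cov that(1)] by blast
  qed
  obtain B where B: "pi_base \<rho> B" "MA_countable B"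
    using assms(9) unfolding pi_weight_less_mc_def pi_weight_witness_def by blast
  have Binf: "infinite B" using pi_base_infinite[OF assms(8) assms(7) assms(6) B(1)] .
  have BV: "infinite V \<and> V \<subseteq> ?Y" if "V \<in> B" for V
  proof -
    have "openin \<rho> V" "V \<noteq> {}" using B(1) that unfolding pi_base_def by blast+
    then show ?thesis using open_infinite[OF assms(8) assms(7)] openin_subset by blast
  qed
  have Yinf: "infinite ?Y" using open_infinite[OF assms(8) assms(7) _ assms(6)] by simp
  have Xne: "X \<noteq> {}" using assms(2) by auto
  obtain V0 where V0: "V0 \<in> B" using Binf by (metis finite.emptyI ex_in_conv)
  define C where "C = conds X ?Y"
  have Cc: "countable C" unfolding C_def using assms(1,5) by (rule conds_countable)
  have Cne: "C \<noteq> {}" unfolding C_def using conds_empty by blast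
  define dec where "dec = from_nat_into C"
  have decC: "dec n \<in> C" for n unfolding dec_def using Cne by (rule from_nat_into)
  have decS: "\<exists>n. dec n = p" if "p \<in> C" for p unfolding dec_def using Cc that by (rule from_nat_into_surj)
  define le where "le = (\<lambda>m n. dec n \<subseteq> dec m)"
  have dense: "dense_in_poset UNIV le {n. Q (dec n)}" if H: "\<forall>p\<in>C. \<exists>q\<in>C. p \<subseteq> q \<and> Q q" for Q
    unfolding dense_in_poset_def
  proof (intro conjI ballI)
    fix m :: nat
    obtain q where q: "q \<in> C" "dec m \<subseteq> q" "Q q" using H decC by blast
    obtain n where "dec n = q" using decS[OF q(1)] by blast
    then show "\<exists>n\<in>{n. Q (dec n)}. le n m" using q unfolding le_def by blast
  qed simp
  define Dx where "Dx x = {n. x \<in> fst ` dec n}" for x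
  define Dy where "Dy y = {n. y \<in> snd ` dec n}" for y
  define DV where "DV V j = {n. \<exists>k\<ge>j. \<forall>a\<in>ts X Ns k. \<exists>b\<in>V. (a,b) \<in> dec n}" for V j
  define \<Phi> where "\<Phi> = (\<lambda>(V, n). if n mod 3 = 0 then DV V (n div 3)
      else if n mod 3 = 1 then Dx (from_nat_into X (n div 3)) else Dy (from_nat_into ?Y (n div 3)))"
  define \<D> where "\<D> = \<Phi> ` (B \<times> (UNIV::nat set))"
  have dDx: "dense_in_poset UNIV le (Dx x)" if x: "x \<in> X" for x
  proof -
    have "\<forall>p\<in>C. \<exists>q\<in>C. p \<subseteq> q \<and> x \<in> fst ` q"
      using ext_single[OF _ x Yinf] unfolding C_def by blast
    then show ?thesis using dense[of "\<lambda>q. x \<in> fst ` q"] unfolding Dx_def by simp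
  qed
  have dDy: "dense_in_poset UNIV le (Dy y)" if y: "y \<in> ?Y" for y
  proof -
    have "\<forall>p\<in>C. \<exists>q\<in>C. p \<subseteq> q \<and> y \<in> snd ` q"
      using conds_extend_right[OF _ y assms(2)] unfolding C_def by blast
    then show ?thesis using dense[of "\<lambda>q. y \<in> snd ` q"] unfolding Dy_def by simp
  qed
  have dDV: "dense_in_poset UNIV le (DV V j)" if V: "V \<in> B" for V j
  proof -
    have "\<forall>p\<in>C. \<exists>q\<in>C. p \<subseteq> q \<and> (\<exists>k\<ge>j. \<forall>a\<in>ts X Ns k. \<exists>b\<in>V. (a,b) \<in> q)"
    proof
      fix p assume p: "p \<in> C"
      have "finite p" using p unfolding C_def conds_def by blast
      then have "finite (fst ` p)" by simp
      then obtain k where k: "k \<ge> j" "tG X Ns k \<inter> fst ` p = {}" using finite_meets[OF nd] by blast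
      have S: "finite (ts X Ns k)" "ts X Ns k \<subseteq> X" "ts X Ns k \<inter> fst ` p = {}"
        using tG_prop(1,2,4)[OF nd, where k=k] k(2) finite_subset by blast+
      have "\<exists>q\<in>conds X ?Y. p \<subseteq> q \<and> (\<forall>a\<in>ts X Ns k. \<exists>b\<in>V. (a,b) \<in> q)"
        apply (rule conds_extend[OF p[unfolded C_def] S])
        using BV[OF V] apply blast
        using BV[OF V] apply blast
        done
      then show "\<exists>q\<in>C. p \<subseteq> q \<and> (\<exists>k\<ge>j. \<forall>a\<in>ts X Ns k. \<exists>b\<in>V. (a,b) \<in> q)"
        using k(1) unfolding C_def by blast
    qed
    then show ?thesis using dense[of "\<lambda>q. \<exists>k\<ge>j. \<forall>a\<in>ts X Ns k. \<exists>b\<in>V. (a,b) \<in> q"] unfolding DV_def by simp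
  qed
  have alld: "\<forall>D\<in>\<D>. dense_in_poset UNIV le D"
  proof
    fix D assume "D \<in> \<D>"
    then obtain V n where Vn: "V \<in> B" "D = \<Phi> (V, n)" unfolding \<D>_def by blast
    show "dense_in_poset UNIV le D"
    proof (cases "n mod 3 = 0")
      case True then show ?thesis using Vn dDV unfolding \<Phi>_def by simp
    next
      case False note F0 = False
      show ?thesis
      proof (cases "n mod 3 = 1")
        case True then show ?thesis using Vn dDx from_nat_into[OF Xne] F0 unfolding \<Phi>_def by simp
      next
        case False then show ?thesis using Vn dDy from_nat_into[OF assms(6)] F0 unfolding \<Phi>_def by simp
      qed
    qed
  qed
  have card: "(card_of \<D>, card_of B) \<in> ordLeq"
  proof -
    have a: "(card_of \<D>, card_of (B \<times> (UNIV::nat set))) \<in> ordLeq" unfolding \<D>_def by (rule card_of_image)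
    have "(card_of (UNIV::nat set), card_of B) \<in> ordLeq" using Binf infinite_iff_card_of_nat by blast
    then have b: "(card_of (B \<times> (UNIV::nat set)), card_of B) \<in> ordIso"
      using card_of_Times_infinite_simps(1)[OF Binf] by blast
    show ?thesis using ordLeq_ordIso_trans[OF a b] .
  qed
  have ctbl: "ctbl_poset UNIV le" unfolding ctbl_poset_def le_def by auto
  obtain G where G: "filter_in_poset UNIV le G" "\<forall>D\<in>\<D>. G \<inter> D \<noteq> {}"
  proof -
    have MA: "\<forall>P le (\<D>::nat set set). ctbl_poset P le
      \<and> (card_of \<D>, card_of B) \<in> ordLeq \<and> (\<forall>D\<in>\<D>. dense_in_poset P le D)
      \<longrightarrow> (\<exists>G. filter_in_poset P le G \<and> (\<forall>D\<in>\<D>. G \<inter> D \<noteq> {}))"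
      using B(2) unfolding MA_countable_def .
    have "\<exists>G. filter_in_poset UNIV le G \<and> (\<forall>D\<in>\<D>. G \<inter> D \<noteq> {})"
      using MA[rule_format, OF conjI[OF ctbl conjI[OF card alld]]] .
    then show ?thesis using that by blast
  qed
  define R where "R = \<Union>(dec ` G)"
  have RXY: "R \<subseteq> X \<times> ?Y" using decC unfolding R_def C_def conds_def by blast
  have Rinj: "a = c \<longleftrightarrow> b = d" if abR: "(a,b) \<in> R" "(c,d) \<in> R" for a b c d
  proof -
    obtain n m where nm: "n \<in> G" "m \<in> G" "(a,b) \<in> dec n" "(c,d) \<in> dec m" using abR unfolding R_def by blast
    obtain r where "r \<in> G" "le r n" "le r m" using G(1) nm(1,2) unfolding filter_in_poset_def by blast
    then have "(a,b) \<in> dec r" "(c,d) \<in> dec r" using nm unfolding le_def by blast+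
    then show ?thesis using decC[of r] unfolding C_def conds_def by blast
  qed
  have hit: "\<exists>n\<in>G. n \<in> \<Phi> (V, i)" if "V \<in> B" for V i
  proof -
    have "\<Phi> (V, i) \<in> \<D>" unfolding \<D>_def using that by blast
    then show ?thesis using G(2) by blast
  qed
  have Rx: "\<exists>y. (x,y) \<in> R" if x: "x \<in> X" for x
  proof -
    obtain i where i: "from_nat_into X i = x" using from_nat_into_surj[OF assms(1) x] by blast
    have e: "(3*i+1) mod 3 = 1" "(3*i+1) div 3 = i" by presburger+
    have "\<Phi> (V0, 3*i+1) = Dx x" unfolding \<Phi>_def prod.case e using i by simp
    then obtain n where "n \<in> G" "x \<in> fst ` dec n" using hit[OF V0, of "3*i+1"] unfolding Dx_def by auto
    then show ?thesis unfolding R_def by force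
  qed
  have Ry: "\<exists>x. (x,y) \<in> R" if y: "y \<in> ?Y" for y
  proof -
    obtain i where i: "from_nat_into ?Y i = y" using from_nat_into_surj[OF assms(5) y] by blast
    have e: "(3*i+2) mod 3 = 2" "(3*i+2) div 3 = i" by presburger+
    have "\<Phi> (V0, 3*i+2) = Dy y" unfolding \<Phi>_def prod.case e using i by simp
    then obtain n where "n \<in> G" "y \<in> snd ` dec n" using hit[OF V0, of "3*i+2"] unfolding Dy_def by auto
    then show ?thesis unfolding R_def by force
  qed
  have RV: "\<exists>k\<ge>j. \<forall>a\<in>ts X Ns k. \<exists>b\<in>V. (a,b) \<in> R" if V: "V \<in> B" for V j
  proof -
    have "\<Phi> (V, 3*j) = DV V j" unfolding \<Phi>_def by simp
    then obtain n where "n \<in> G" "n \<in> DV V j" using hit[OF V, of "3*j"] by auto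
    then obtain k where k: "k \<ge> j" "\<forall>a\<in>ts X Ns k. \<exists>b\<in>V. (a,b) \<in> dec n"
      unfolding DV_def by blast
    have sub: "dec n \<subseteq> R" using \<open>n \<in> G\<close> unfolding R_def by blast
    have "\<forall>a\<in>ts X Ns k. \<exists>b\<in>V. (a,b) \<in> R"
    proof
      fix a assume "a \<in> ts X Ns k"
      then obtain b where "b \<in> V" "(a,b) \<in> dec n" using k(2) by blast
      then show "\<exists>b\<in>V. (a,b) \<in> R" using sub by blast
    qed
    then show ?thesis using k(1) by blast
  qed
  define g where "g x = (THE y. (x,y) \<in> R)" for x
  have gval: "g x = y" if "(x,y) \<in> R" for x y
    unfolding g_def using that Rinj by (intro the_equality) blast+
  have gR: "(x, g x) \<in> R" if "x \<in> X" for x using Rx[OF that] gval by metis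
  have gY: "g x \<in> ?Y" if "x \<in> X" for x using gR[OF that] RXY by blast
  have ginj: "inj_on g X"
    unfolding inj_on_def using gR Rinj by metis
  have gsurj: "g ` X = ?Y"
  proof
    show "g ` X \<subseteq> ?Y" using gY by blast
    show "?Y \<subseteq> g ` X"
    proof
      fix y assume "y \<in> ?Y"
      then obtain x where "(x,y) \<in> R" using Ry by blast
      then have "x \<in> X" "g x = y" using RXY gval by blast+
      then show "y \<in> g ` X" by blast
    qed
  qed
  have AV: "{x \<in> X. g x \<in> V} \<notin> I" if V: "V \<in> B" for V
  proof (rule keyI)
    show "{x \<in> X. g x \<in> V} \<subseteq> X" by blast
    show "\<forall>j. \<exists>k\<ge>j. ts X Ns k \<subseteq> {x \<in> X. g x \<in> V}"
    proof
      fix j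
      obtain k where k: "k \<ge> j" "\<forall>a\<in>ts X Ns k. \<exists>b\<in>V. (a,b) \<in> R" using RV[OF V] by blast
      have "ts X Ns k \<subseteq> {x \<in> X. g x \<in> V}"
      proof
        fix a assume "a \<in> ts X Ns k"
        then obtain b where "b \<in> V" "(a,b) \<in> R" using k(2) by blast
        then show "a \<in> {x \<in> X. g x \<in> V}" using RXY gval by blast
      qed
      then show "\<exists>k\<ge>j. ts X Ns k \<subseteq> {x \<in> X. g x \<in> V}" using k(1) by blast
    qed
  qed
  define \<tau> where "\<tau> = pullback_topology X g \<rho>"
  have top: "topspace \<tau> = X" unfolding \<tau>_def topspace_pullback_topology using gY by blast
  have crowd: "I_crowded I \<tau>"
    unfolding I_crowded_def
  proof (intro allI impI)
    fix U assume U: "openin \<tau> U \<and> U \<in> I"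
    then obtain W where W: "openin \<rho> W" "U = g -` W \<inter> X" unfolding \<tau>_def openin_pullback_topology by blast
    show "U = {}"
    proof (rule ccontr)
      assume "U \<noteq> {}"
      then have "W \<noteq> {}" using W(2) by blast
      then obtain V where V: "V \<in> B" "V \<subseteq> W" using B(1) W(1) unfolding pi_base_def by blast
      have "{x \<in> X. g x \<in> V} \<subseteq> U" using V(2) W(2) by blast
      then have "{x \<in> X. g x \<in> V} \<in> I" using Ihered U by blast
      then show False using AV[OF V(1)] by blast
    qed
  qed
  have cont: "continuous_map \<tau> \<rho> g"
    unfolding continuous_map_def
  proof (intro conjI allI impI)
    show "g \<in> topspace \<tau> \<rightarrow> ?Y" using top gY by blast
    fix U assume "openin \<rho> U"
    moreover have "{x \<in> topspace \<tau>. g x \<in> U} = g -` U \<inter> X" using top by blast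
    ultimately show "openin \<tau> {x \<in> topspace \<tau>. g x \<in> U}"
      unfolding \<tau>_def openin_pullback_topology by metis
  qed
  have opm: "open_map \<tau> \<rho> g"
    unfolding open_map_def
  proof (intro allI impI)
    fix U assume "openin \<tau> U"
    then obtain W where W: "openin \<rho> W" "U = g -` W \<inter> X" unfolding \<tau>_def openin_pullback_topology by blast
    have "W \<subseteq> ?Y" using W(1) by (rule openin_subset)
    have "g ` U = W \<inter> g ` X" unfolding W(2) by auto
    then have "g ` U = W" using \<open>W \<subseteq> ?Y\<close> gsurj by (simp add: Int_absorb2)
    then show "openin \<rho> (g ` U)" using W(1) by simp
  qed
  have "homeomorphic_map \<tau> \<rho> g"
    by (rule bijective_open_imp_homeomorphic_map[OF cont opm]) (use top gsurj ginj in auto)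
  then have "\<tau> homeomorphic_space \<rho>" unfolding homeomorphic_space_def homeomorphic_map_maps by blast
  then show ?thesis using top crowd by blast
qed


end
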